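(* Fix $n,m,\mu\in\mathbb{N}$ and $\delta\in\mathbb{R}$, and fix angles $\theta_1,\dots,\theta_n$ and $\phi_1,\dots,\phi_m$ satisfying $|\theta_i|,|\phi_j|<\pi/2$ if $\mu=1$ and $|\theta_i|,|\phi_j|<\pi/(2(\mu-1))$ if $\mu>1$. Let $S$ be the set of triples $(x,v,\zeta)\in[0,+\infty)^{n+m}\times[0,+\infty)^n\times(0,+\infty)^m$ with $x_1\geq x_2\geq\cdots\geq x_{n+m}$ such that $$x\succ_w (v_1,\dots,v_n,\zeta_1^\mu,\dots,\zeta_m^\mu)$$ and $$\sum_{i=1}^n x_i^{k/\mu}+\sum_{i=1}^n v_i^{k/\mu}\cos(\theta_i k)\;\geq\;\sum_{i=1}^m \zeta_i^{k}\cos(\phi_i k)\quad\text{for all }k\in\{1,\dots,\mu-1\}.$$ Then $S$ is a convex set.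
   Context: For $y\in\mathbb{R}^{N}$, $y^{\downarrow}$ is the vector of its components sorted in descending order; $x\succ_w y$ (weak majorization) means $\sum_{i=1}^k x^{\downarrow}_i\geq\sum_{i=1}^k y^{\downarrow}_i$ for all $k=1,\dots,N$. Interpretation: for a transfer function with poles $p\in\mathbb{C}^n$ ($p_1,\dots,p_{n_r}$ real, the rest non-real) and zeros $z\in\mathbb{C}^m$, with $\theta_i=\angle(p_i+\delta)$, $\phi_j=\angle(z_j+\delta)$, $w_i=(p_i+\delta)^\mu$ for $i\le n_r$ and $w_i=0$ otherwise, $v_i=0$ for $i\le n_r$, $v_i=|p_i+\delta|^\mu$ for $n_r<i\le n$, and $\zeta_j=|z_j+\delta|$, the variables are $x=w^{\downarrow}$, $(v_1,\dots,v_n)$ and $\zeta$, and the two displayed conditions are the sufficient conditions for logarithmic complete monotonicity expressed in these variables. *)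

theory Defs
  imports "HOL-Analysis.Analysis"
begin

text \<open>Vectors of length N are represented as lists; the descending rearrangement
  of xs is rev (sort xs).\<close>

definition desc_sort :: "real list \<Rightarrow> real list" where
  "desc_sort xs = rev (sort xs)"

definition weakly_majorizes :: "real list \<Rightarrow> real list \<Rightarrow> bool" where
  "weakly_majorizes xs ys \<longleftrightarrow> length xs = length ys \<and>
     (\<forall>k\<in>{1..length xs}. sum_list (take k (desc_sort xs)) \<ge> sum_list (take k (desc_sort ys)))"

text \<open>The set S. Points of R^(n+m), R^n, R^m are encoded as functions nat \<Rightarrow> real
  with indices 0..N-1 and vanishing outside.\<close>
definition setS :: "nat \<Rightarrow> nat \<Rightarrow> nat \<Rightarrow> (nat \<Rightarrow> real) \<Rightarrow> (nat \<Rightarrow> real)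
     \<Rightarrow> ((nat \<Rightarrow> real) \<times> (nat \<Rightarrow> real) \<times> (nat \<Rightarrow> real)) set" where
  "setS n m \<mu> \<theta> \<phi> = {(x, v, \<zeta>).
     (\<forall>i. i \<ge> n + m \<longrightarrow> x i = 0) \<and> (\<forall>i. i \<ge> n \<longrightarrow> v i = 0) \<and> (\<forall>j. j \<ge> m \<longrightarrow> \<zeta> j = 0) \<and>
     (\<forall>i < n + m. x i \<ge> 0) \<and> (\<forall>i < n. v i \<ge> 0) \<and> (\<forall>j < m. \<zeta> j > 0) \<and>
     (\<forall>i j. i \<le> j \<longrightarrow> j < n + m \<longrightarrow> x i \<ge> x j) \<and>
     weakly_majorizes (map x [0..<n+m]) (map v [0..<n] @ map (\<lambda>j. \<zeta> j ^ \<mu>) [0..<m]) \<and>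
     (\<forall>k\<in>{1..<\<mu>}.
        (\<Sum>i<n. x i powr (real k / real \<mu>)) + (\<Sum>i<n. v i powr (real k / real \<mu>) * cos (\<theta> i * real k))
          \<ge> (\<Sum>j<m. \<zeta> j ^ k * cos (\<phi> j * real k)))}"

end

theory Submission
  imports Defs
begin

lemma powr_concave_pt:
  fixes a b t p :: real
  assumes p: "0 < p" "p \<le> 1" and ab: "a \<ge> 0" "b \<ge> 0" and t: "0 \<le> t" "t \<le> 1"
  shows "(1-t) * a powr p + t * b powr p \<le> ((1-t)*a + t*b) powr p"
proof -
  have tp: "s \<le> s powr p" if "0 \<le> s" "s \<le> 1" for s :: real
  proof (cases "s = 0")
    case False
    then have "s powr 1 \<le> s powr p" using that p by (intro powr_mono') auto
    then show ?thesis using that by simp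
  qed simp
  show ?thesis
  proof (cases "a = 0")
    case True
    have "t * b powr p \<le> t powr p * b powr p"
      using tp[of t] t by (intro mult_right_mono) auto
    also have "\<dots> = (t*b) powr p" using t ab by (simp add: powr_mult)
    finally show ?thesis using True by simp
  next
    case a: False
    show ?thesis
    proof (cases "b = 0")
      case True
      have "(1-t) * a powr p \<le> (1-t) powr p * a powr p"
        using tp[of "1-t"] t by (intro mult_right_mono) auto
      also have "\<dots> = ((1-t)*a) powr p" using t ab by (simp add: powr_mult)
      finally show ?thesis using True by simp
    next
      case False
      have cc: "concave_on {0<..} (\<lambda>x::real. x powr p)"
      proof (rule f''_le0_imp_concave[where f'="\<lambda>x. p * x powr (p - 1)" and f''="\<lambda>x. p * ((p - 1) * x powr (p - 1 - 1))"])
        fix x :: real assume x: "x \<in> {0<..}"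
        show "((\<lambda>x. x powr p) has_real_derivative p * x powr (p - 1)) (at x)"
          using x by (auto intro!: derivative_eq_intros)
        show "((\<lambda>x. p * x powr (p - 1)) has_real_derivative p * ((p - 1) * x powr (p - 1 - 1))) (at x)"
          using x by (auto intro!: derivative_eq_intros)
        show "p * ((p - 1) * x powr (p - 1 - 1)) \<le> 0"
          using x p by (intro mult_nonneg_nonpos mult_nonpos_nonneg) auto
      qed simp
      show ?thesis using concave_onD[OF cc, of t a b] t ab a False by auto
    qed
  qed
qed

lemma power_convex_pt:
  fixes a b t :: real
  assumes ab: "a \<ge> 0" "b \<ge> 0" and t: "0 \<le> t" "t \<le> 1"
  shows "((1-t)*a + t*b) ^ n \<le> (1-t) * a ^ n + t * b ^ n"
proof -
  have "convex_on {0..} (\<lambda>x::real. x ^ n)"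
    by (cases "even n") (auto intro: convex_power_odd convex_on_subset[OF convex_power_even])
  from convex_onD[OF this, of t a b] show ?thesis using ab t by auto
qed


lemma mset_sum_list_map:
  assumes "mset xs = mset ys"
  shows "sum_list (map (f::real\<Rightarrow>real) xs) = sum_list (map f ys)"
proof -
  have "sum_list (map f xs) = sum_mset (mset (map f xs))" by (metis mset_map sum_mset_sum_list)
  also have "\<dots> = sum_mset (mset (map f ys))" using assms by simp
  also have "\<dots> = sum_list (map f ys)" by (metis mset_map sum_mset_sum_list)
  finally show ?thesis .
qed

lemma mset_desc_sort: "mset (desc_sort xs) = mset xs"
  by (simp add: desc_sort_def)

lemma topk_le:
  assumes "k \<le> length ws"
  shows "sum_list (take k (desc_sort ws)) \<le> real k * c + sum_list (map (\<lambda>w. max (w - c) 0) ws)"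
proof -
  define d where "d = desc_sort ws"
  have ld: "length d = length ws" unfolding d_def desc_sort_def by simp
  have "sum_list (map (\<lambda>w. w) (take k d)) \<le> sum_list (map (\<lambda>w. max (w - c) 0 + c) (take k d))"
    by (rule sum_list_mono) auto
  then have "sum_list (take k d) \<le> sum_list (map (\<lambda>w. max (w - c) 0 + c) (take k d))" by simp
  also have "\<dots> = sum_list (map (\<lambda>w. max (w - c) 0) (take k d)) + real k * c"
    using assms ld by (simp add: sum_list_addf sum_list_triv)
  also have "sum_list (map (\<lambda>w. max (w - c) 0) (take k d)) \<le> sum_list (map (\<lambda>w. max (w - c) 0) d)"
  proof -
    have "sum_list (map (\<lambda>w. max (w - c) 0) d) = sum_list (map (\<lambda>w. max (w - c) 0) (take k d)) + sum_list (map (\<lambda>w. max (w - c) 0) (drop k d))"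
      by (metis append_take_drop_id map_append sum_list_append)
    moreover have "sum_list (map (\<lambda>w. max (w - c) 0) (drop k d)) \<ge> 0"
      by (intro sum_list_nonneg) auto
    ultimately show ?thesis by simp
  qed
  also have "sum_list (map (\<lambda>w. max (w - c) 0) d) = sum_list (map (\<lambda>w. max (w - c) 0) ws)"
    unfolding d_def by (rule mset_sum_list_map[OF mset_desc_sort])
  finally show ?thesis unfolding d_def by simp
qed

lemma topk_eq:
  assumes "1 \<le> k" "k \<le> length ws"
  shows "\<exists>c. sum_list (take k (desc_sort ws)) = real k * c + sum_list (map (\<lambda>w. max (w - c) 0) ws)"
proof -
  define d where "d = desc_sort ws"
  have ld: "length d = length ws" unfolding d_def desc_sort_def by simp
  have sd: "sorted_wrt (\<ge>) d" unfolding d_def desc_sort_def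
    by (simp add: sorted_wrt_rev)
  define T where "T = take k d"
  define D where "D = drop k d"
  have dTD: "d = T @ D" unfolding T_def D_def by simp
  have lT: "length T = k" using assms ld unfolding T_def by simp
  have Tne: "set T \<noteq> {}" using lT assms by auto
  define c where "c = Min (set T)"
  have cT: "c \<in> set T" unfolding c_def using Tne by simp
  have Tge: "\<forall>x\<in>set T. c \<le> x" unfolding c_def by simp
  have TD: "\<forall>x\<in>set T. \<forall>y\<in>set D. y \<le> x" using sd dTD by (simp add: sorted_wrt_append)
  have Dle: "\<forall>y\<in>set D. y \<le> c" using TD cT by blast
  have "sum_list (map (\<lambda>w. max (w - c) 0) ws) = sum_list (map (\<lambda>w. max (w - c) 0) d)"
    unfolding d_def by (rule mset_sum_list_map[OF mset_desc_sort[symmetric]])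
  also have "\<dots> = sum_list (map (\<lambda>w. max (w - c) 0) T) + sum_list (map (\<lambda>w. max (w - c) 0) D)"
    using dTD by simp
  also have "map (\<lambda>w. max (w - c) 0) T = map (\<lambda>w. w - c) T"
    using Tge by (intro map_cong) auto
  also have "map (\<lambda>w. max (w - c) 0) D = map (\<lambda>w. 0) D"
    using Dle by (intro map_cong) auto
  also have "sum_list (map (\<lambda>w. w - c) T) = sum_list T - real k * c"
    using lT by (simp add: sum_list_subtractf sum_list_triv)
  finally have "sum_list (map (\<lambda>w. max (w - c) 0) ws) = sum_list T - real k * c"
    by (simp add: sum_list_triv)
  then show ?thesis unfolding T_def d_def by (intro exI[of _ c]) simp
qed

lemma topk_convex:
  assumes len: "length ws = N" "length as = N" "length bs = N"
    and t: "0 \<le> t" "t \<le> 1"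
    and pt: "\<And>i. i < N \<Longrightarrow> ws ! i \<le> (1 - t) * as ! i + t * bs ! i"
    and k: "1 \<le> k" "k \<le> N"
  shows "sum_list (take k (desc_sort ws)) \<le>
    (1 - t) * sum_list (take k (desc_sort as)) + t * sum_list (take k (desc_sort bs))"
proof -
  obtain ca where ca: "sum_list (take k (desc_sort as)) = real k * ca + sum_list (map (\<lambda>w. max (w - ca) 0) as)"
    using topk_eq[of k as] k len by auto
  obtain cb where cb: "sum_list (take k (desc_sort bs)) = real k * cb + sum_list (map (\<lambda>w. max (w - cb) 0) bs)"
    using topk_eq[of k bs] k len by auto
  define c where "c = (1 - t) * ca + t * cb"
  have "sum_list (take k (desc_sort ws)) \<le> real k * c + sum_list (map (\<lambda>w. max (w - c) 0) ws)"
    using topk_le[of k ws c] k len by simp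
  also have "sum_list (map (\<lambda>w. max (w - c) 0) ws) = (\<Sum>i<N. max (ws ! i - c) 0)"
    using len by (simp add: sum_list_sum_nth atLeast0LessThan)
  also have "\<dots> \<le> (\<Sum>i<N. (1 - t) * max (as ! i - ca) 0 + t * max (bs ! i - cb) 0)"
  proof (rule sum_mono)
    fix i assume "i \<in> {..<N}"
    then have h: "ws ! i \<le> (1 - t) * as ! i + t * bs ! i" using pt by auto
    have "ws ! i - c \<le> (1 - t) * (as ! i - ca) + t * (bs ! i - cb)"
      using h unfolding c_def by (simp add: algebra_simps)
    also have "\<dots> \<le> (1 - t) * max (as ! i - ca) 0 + t * max (bs ! i - cb) 0"
      using t by (intro add_mono mult_left_mono) auto
    finally show "max (ws ! i - c) 0 \<le> (1 - t) * max (as ! i - ca) 0 + t * max (bs ! i - cb) 0"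
      using t by (simp add: max_def)
  qed
  also have "\<dots> = (1 - t) * sum_list (map (\<lambda>w. max (w - ca) 0) as) + t * sum_list (map (\<lambda>w. max (w - cb) 0) bs)"
    using len by (simp add: sum_list_sum_nth atLeast0LessThan sum.distrib sum_distrib_left)
  finally show ?thesis unfolding ca cb c_def by (simp add: algebra_simps)
qed

lemma desc_sort_sorted:
  assumes "sorted_wrt (\<ge>) xs"
  shows "desc_sort xs = xs"
proof -
  have "sort xs = rev xs"
    by (rule properties_for_sort) (use assms in \<open>auto simp: sorted_wrt_rev\<close>)
  then show ?thesis by (simp add: desc_sort_def)
qed


theorem proposition9:
  fixes n m \<mu> :: nat and \<delta> :: real and \<theta> \<phi> :: "nat \<Rightarrow> real"
  assumes "\<mu> \<ge> 1"
    and "\<mu> = 1 \<Longrightarrow> (\<forall>i<n. \<bar>\<theta> i\<bar> < pi / 2) \<and> (\<forall>j<m. \<bar>\<phi> j\<bar> < pi / 2)"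
    and "\<mu> > 1 \<Longrightarrow> (\<forall>i<n. \<bar>\<theta> i\<bar> < pi / (2 * (real \<mu> - 1))) \<and>
                    (\<forall>j<m. \<bar>\<phi> j\<bar> < pi / (2 * (real \<mu> - 1)))"
  shows "\<forall>a\<in>setS n m \<mu> \<theta> \<phi>. \<forall>b\<in>setS n m \<mu> \<theta> \<phi>. \<forall>t::real. 0 \<le> t \<and> t \<le> 1 \<longrightarrow>
           ((\<lambda>i. (1 - t) * fst a i + t * fst b i),
            (\<lambda>i. (1 - t) * fst (snd a) i + t * fst (snd b) i),
            (\<lambda>i. (1 - t) * snd (snd a) i + t * snd (snd b) i)) \<in> setS n m \<mu> \<theta> \<phi>"
proof (intro ballI allI impI)
  fix a b and t :: real
  assume aS: "a \<in> setS n m \<mu> \<theta> \<phi>" and bS: "b \<in> setS n m \<mu> \<theta> \<phi>" and t: "0 \<le> t \<and> t \<le> 1"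
  obtain xa va za where a: "a = (xa, va, za)" by (cases a) auto
  obtain xb vb zb where b: "b = (xb, vb, zb)" by (cases b) auto
  define N where "N = n + m"
  define x where "x = (\<lambda>i. (1 - t) * xa i + t * xb i)"
  define v where "v = (\<lambda>i. (1 - t) * va i + t * vb i)"
  define z where "z = (\<lambda>i. (1 - t) * za i + t * zb i)"
  have t0: "0 \<le> t" and t1: "t \<le> 1" using t by auto
  note A = aS[unfolded a setS_def, simplified]
  note B = bS[unfolded b setS_def, simplified]
  have xa0: "\<And>i. i \<ge> n + m \<Longrightarrow> xa i = 0" and xb0: "\<And>i. i \<ge> n + m \<Longrightarrow> xb i = 0"
    and va0: "\<And>i. i \<ge> n \<Longrightarrow> va i = 0" and vb0: "\<And>i. i \<ge> n \<Longrightarrow> vb i = 0"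
    and za0: "\<And>i. i \<ge> m \<Longrightarrow> za i = 0" and zb0: "\<And>i. i \<ge> m \<Longrightarrow> zb i = 0"
    and xan: "\<And>i. i < n + m \<Longrightarrow> xa i \<ge> 0" and xbn: "\<And>i. i < n + m \<Longrightarrow> xb i \<ge> 0"
    and van: "\<And>i. i < n \<Longrightarrow> va i \<ge> 0" and vbn: "\<And>i. i < n \<Longrightarrow> vb i \<ge> 0"
    and zap: "\<And>i. i < m \<Longrightarrow> za i > 0" and zbp: "\<And>i. i < m \<Longrightarrow> zb i > 0"
    and xas: "\<And>i j. i \<le> j \<Longrightarrow> j < n + m \<Longrightarrow> xa j \<le> xa i"
    and xbs: "\<And>i j. i \<le> j \<Longrightarrow> j < n + m \<Longrightarrow> xb j \<le> xb i"
    and wa: "weakly_majorizes (map xa [0..<n+m]) (map va [0..<n] @ map (\<lambda>j. za j ^ \<mu>) [0..<m])"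
    and wb: "weakly_majorizes (map xb [0..<n+m]) (map vb [0..<n] @ map (\<lambda>j. zb j ^ \<mu>) [0..<m])"
    and ka: "\<And>k. 1 \<le> k \<Longrightarrow> k < \<mu> \<Longrightarrow> (\<Sum>i<n. xa i powr (real k / real \<mu>)) + (\<Sum>i<n. va i powr (real k / real \<mu>) * cos (\<theta> i * real k))
          \<ge> (\<Sum>j<m. za j ^ k * cos (\<phi> j * real k))"
    and kb: "\<And>k. 1 \<le> k \<Longrightarrow> k < \<mu> \<Longrightarrow> (\<Sum>i<n. xb i powr (real k / real \<mu>)) + (\<Sum>i<n. vb i powr (real k / real \<mu>) * cos (\<theta> i * real k))
          \<ge> (\<Sum>j<m. zb j ^ k * cos (\<phi> j * real k))"
    using A B by auto
  have p1: "\<forall>i. i \<ge> n + m \<longrightarrow> x i = 0" using xa0 xb0 by (simp add: x_def)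
  have p2: "\<forall>i. i \<ge> n \<longrightarrow> v i = 0" using va0 vb0 by (simp add: v_def)
  have p3: "\<forall>i. i \<ge> m \<longrightarrow> z i = 0" using za0 zb0 by (simp add: z_def)
  have p4: "\<forall>i < n + m. x i \<ge> 0" using xan xbn t by (simp add: x_def)
  have p5: "\<forall>i < n. v i \<ge> 0" using van vbn t by (simp add: v_def)
  have p6: "\<forall>j < m. z j > 0"
  proof (intro allI impI)
    fix j assume j: "j < m"
    show "z j > 0"
    proof (cases "t = 0")
      case True then show ?thesis using zap[OF j] by (simp add: z_def)
    next
      case False
      then have "t * zb j > 0" using t zbp[OF j] by simp
      moreover have "(1 - t) * za j \<ge> 0" using t zap[OF j] by simp
      ultimately show ?thesis by (simp add: z_def)
    qed
  qed
  have p7: "\<forall>i j. i \<le> j \<longrightarrow> j < n + m \<longrightarrow> x i \<ge> x j"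
  proof (intro allI impI)
    fix i j assume "i \<le> j" "j < n + m"
    then show "x i \<ge> x j" using xas[of i j] xbs[of i j] t unfolding x_def
      by (intro add_mono mult_left_mono) auto
  qed
  have sortedx: "\<And>y. (\<forall>i j. i \<le> j \<longrightarrow> j < n + m \<longrightarrow> y i \<ge> y j) \<Longrightarrow> desc_sort (map y [0..<n+m]) = map y [0..<n+m]"
    by (rule desc_sort_sorted) (auto simp: sorted_wrt_iff_nth_less)
  have sumx: "\<And>y k. k \<le> n + m \<Longrightarrow> sum_list (take k (map y [0..<n+m])) = (\<Sum>i<k. y i)"
    by (simp add: take_map sum_list_sum_nth atLeast0LessThan)
  define wa' where "wa' = map va [0..<n] @ map (\<lambda>j. za j ^ \<mu>) [0..<m]"
  define wb' where "wb' = map vb [0..<n] @ map (\<lambda>j. zb j ^ \<mu>) [0..<m]"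
  define w where "w = map v [0..<n] @ map (\<lambda>j. z j ^ \<mu>) [0..<m]"
  have p8: "weakly_majorizes (map x [0..<n+m]) w"
    unfolding weakly_majorizes_def
  proof (intro conjI ballI)
    show "length (map x [0..<n + m]) = length w" by (simp add: w_def)
    fix k assume k: "k \<in> {1..length (map x [0..<n + m])}"
    then have k1: "1 \<le> k" and kN: "k \<le> n + m" by auto
    have "sum_list (take k (desc_sort w)) \<le>
        (1 - t) * sum_list (take k (desc_sort wa')) + t * sum_list (take k (desc_sort wb'))"
    proof (rule topk_convex[where N="n+m"])
      show "length w = n + m" "length wa' = n + m" "length wb' = n + m"
        by (auto simp: w_def wa'_def wb'_def)
      show "0 \<le> t" "t \<le> 1" "1 \<le> k" "k \<le> n + m" using t k1 kN by auto
      fix i assume i: "i < n + m"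
      show "w ! i \<le> (1 - t) * wa' ! i + t * wb' ! i"
      proof (cases "i < n")
        case True then show ?thesis by (simp add: w_def wa'_def wb'_def nth_append v_def)
      next
        case False
        then have j: "i - n < m" using i by simp
        have "z (i - n) ^ \<mu> \<le> (1 - t) * za (i - n) ^ \<mu> + t * zb (i - n) ^ \<mu>"
          unfolding z_def using zap[OF j] zbp[OF j] t by (intro power_convex_pt) auto
        then show ?thesis using False j by (simp add: w_def wa'_def wb'_def nth_append)
      qed
    qed
    also have "sum_list (take k (desc_sort wa')) \<le> (\<Sum>i<k. xa i)"
      using wa k kN xas unfolding weakly_majorizes_def wa'_def
      by (auto simp: sortedx sumx)
    also have "sum_list (take k (desc_sort wb')) \<le> (\<Sum>i<k. xb i)"
      using wb k kN xbs unfolding weakly_majorizes_def wb'_def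
      by (auto simp: sortedx sumx)
    finally have "sum_list (take k (desc_sort w)) \<le> (1 - t) * (\<Sum>i<k. xa i) + t * (\<Sum>i<k. xb i)"
      using t by (smt (verit) mult_left_mono)
    also have "\<dots> = (\<Sum>i<k. x i)" by (simp add: x_def sum.distrib sum_distrib_left)
    also have "\<dots> = sum_list (take k (desc_sort (map x [0..<n + m])))"
      using p7 kN by (simp add: sortedx sumx)
    finally show "sum_list (take k (desc_sort (map x [0..<n + m]))) \<ge> sum_list (take k (desc_sort w))" .
  qed
  have p9: "\<forall>k\<in>{1..<\<mu>}.
        (\<Sum>i<n. x i powr (real k / real \<mu>)) + (\<Sum>i<n. v i powr (real k / real \<mu>) * cos (\<theta> i * real k))
          \<ge> (\<Sum>j<m. z j ^ k * cos (\<phi> j * real k))"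
  proof
    fix k assume k: "k \<in> {1..<\<mu>}"
    then have k1: "1 \<le> k" and kmu: "k < \<mu>" by auto
    then have mu1: "\<mu> > 1" by simp
    define p where "p = real k / real \<mu>"
    have p0: "0 < p" and p1: "p \<le> 1" using k1 kmu by (auto simp: p_def)
    have kle: "real k \<le> real \<mu> - 1" using kmu by linarith
    have cospos: "cos (\<alpha> * real k) \<ge> 0" if "\<bar>\<alpha>\<bar> < pi / (2 * (real \<mu> - 1))" for \<alpha>
    proof -
      have mpos: "real \<mu> - 1 > 0" using mu1 by simp
      have "\<bar>\<alpha> * real k\<bar> = \<bar>\<alpha>\<bar> * real k" by (simp add: abs_mult)
      also have "\<dots> \<le> \<bar>\<alpha>\<bar> * (real \<mu> - 1)" using kle by (intro mult_left_mono) auto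
      also have "\<dots> \<le> pi / (2 * (real \<mu> - 1)) * (real \<mu> - 1)"
        using that mpos by (intro mult_right_mono) auto
      also have "\<dots> = pi / 2" using mpos by (simp add: field_simps)
      finally show ?thesis by (intro cos_ge_zero) auto
    qed
    have cth: "\<And>i. i < n \<Longrightarrow> cos (\<theta> i * real k) \<ge> 0" using assms(3)[OF mu1] cospos by auto
    have cph: "\<And>j. j < m \<Longrightarrow> cos (\<phi> j * real k) \<ge> 0" using assms(3)[OF mu1] cospos by auto
    have s1: "(1 - t) * (\<Sum>i<n. xa i powr p) + t * (\<Sum>i<n. xb i powr p) \<le> (\<Sum>i<n. x i powr p)"
      unfolding sum_distrib_left sum.distrib[symmetric] x_def
      using xan xbn t p0 p1 by (intro sum_mono powr_concave_pt) auto
    have s2: "(1 - t) * (\<Sum>i<n. va i powr p * cos (\<theta> i * real k)) + t * (\<Sum>i<n. vb i powr p * cos (\<theta> i * real k))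
        \<le> (\<Sum>i<n. v i powr p * cos (\<theta> i * real k))"
      unfolding sum_distrib_left sum.distrib[symmetric] v_def
    proof (rule sum_mono)
      fix i assume "i \<in> {..<n}"
      then have i: "i < n" by simp
      have "(1 - t) * va i powr p + t * vb i powr p \<le> ((1 - t) * va i + t * vb i) powr p"
        using van[OF i] vbn[OF i] t p0 p1 by (intro powr_concave_pt) auto
      from mult_right_mono[OF this cth[OF i]]
      show "(1 - t) * (va i powr p * cos (\<theta> i * real k)) + t * (vb i powr p * cos (\<theta> i * real k))
          \<le> ((1 - t) * va i + t * vb i) powr p * cos (\<theta> i * real k)"
        by (simp add: algebra_simps)
    qed
    have s3: "(\<Sum>j<m. z j ^ k * cos (\<phi> j * real k)) \<le>
        (1 - t) * (\<Sum>j<m. za j ^ k * cos (\<phi> j * real k)) + t * (\<Sum>j<m. zb j ^ k * cos (\<phi> j * real k))"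
      unfolding sum_distrib_left sum.distrib[symmetric] z_def
    proof (rule sum_mono)
      fix j assume "j \<in> {..<m}"
      then have j: "j < m" by simp
      have "((1 - t) * za j + t * zb j) ^ k \<le> (1 - t) * za j ^ k + t * zb j ^ k"
        using zap[OF j] zbp[OF j] t by (intro power_convex_pt) auto
      from mult_right_mono[OF this cph[OF j]]
      show "((1 - t) * za j + t * zb j) ^ k * cos (\<phi> j * real k)
          \<le> (1 - t) * (za j ^ k * cos (\<phi> j * real k)) + t * (zb j ^ k * cos (\<phi> j * real k))"
        by (simp add: algebra_simps)
    qed
    have ka': "(\<Sum>i<n. xa i powr p) + (\<Sum>i<n. va i powr p * cos (\<theta> i * real k)) \<ge> (\<Sum>j<m. za j ^ k * cos (\<phi> j * real k))"
      using ka[OF k1 kmu] by (simp add: p_def)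
    have kb': "(\<Sum>i<n. xb i powr p) + (\<Sum>i<n. vb i powr p * cos (\<theta> i * real k)) \<ge> (\<Sum>j<m. zb j ^ k * cos (\<phi> j * real k))"
      using kb[OF k1 kmu] by (simp add: p_def)
    have "(1 - t) * (\<Sum>j<m. za j ^ k * cos (\<phi> j * real k)) + t * (\<Sum>j<m. zb j ^ k * cos (\<phi> j * real k))
       \<le> (1 - t) * ((\<Sum>i<n. xa i powr p) + (\<Sum>i<n. va i powr p * cos (\<theta> i * real k)))
         + t * ((\<Sum>i<n. xb i powr p) + (\<Sum>i<n. vb i powr p * cos (\<theta> i * real k)))"
      using ka' kb' t by (intro add_mono mult_left_mono) auto
    with s1 s2 s3 show "(\<Sum>i<n. x i powr (real k / real \<mu>)) + (\<Sum>i<n. v i powr (real k / real \<mu>) * cos (\<theta> i * real k))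
          \<ge> (\<Sum>j<m. z j ^ k * cos (\<phi> j * real k))"
      unfolding p_def[symmetric] by (simp add: algebra_simps)
  qed
  have "(x, v, z) \<in> setS n m \<mu> \<theta> \<phi>"
    unfolding setS_def using p1 p2 p3 p4 p5 p6 p7 p8 p9 unfolding w_def by blast
  then show "((\<lambda>i. (1 - t) * fst a i + t * fst b i),
            (\<lambda>i. (1 - t) * fst (snd a) i + t * fst (snd b) i),
            (\<lambda>i. (1 - t) * snd (snd a) i + t * snd (snd b) i)) \<in> setS n m \<mu> \<theta> \<phi>"
    by (simp add: a b x_def v_def z_def)
qed

end
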